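(* For every metric space $(X,d_X)$ with finite asymptotic dimension there exists a metric $d_X'$ on $X$ such that the identity $(X,d_X)\to(X,d_X')$ is a coarse equivalence, $\operatorname{asdim}_{AN}(X,d_X')=\operatorname{asdim}(X,d_X)$, and every asymptotic cone of $(X,d_X')$ is an ultrametric space. Moreover, if $X$ is a countable group and $d_X$ is a proper left invariant metric, then $d_X'$ can be taken to be a proper left invariant metric.
   Context: An $s$-scale chain ($s>0$) is a finite sequence $x_0,\dots,x_m$ with $d(x_i,x_{i+1})<s$; $s$-scale connected components of a subset $U$ are classes of "joined by an $s$-scale chain inside $U$". A nondecreasing $D\colon\mathbb{R}_+\to\mathbb{R}_+$ is an $n$-dimensional control function if for each $s>0$ there is a cover $\{\mathcal U_0,\dots,\mathcal U_n\}$ of $X$ whose members have $s$-scale components of diameter $\le D(s)$. $\operatorname{asdim}(X)\le n$ if some $n$-dimensional control function exists; $\operatorname{asdim}_{AN}(X)\le n$ if one of the form $Cs+k$ ($C>0,k\in\mathbb{R}$) exists. A map $f$ is a coarse embedding if $\rho_-(d(x,y))\le d(f(x),f(y))\le\rho_+(d(x,y))$ for nondecreasing $\rho_\pm$ with $\rho_-\to\infty$; it is a coarse equivalence if moreover its image is $K$-dense for some $K$. A metric $d_G$ on a group $G$ is proper left invariant if $d_G(gh,gk)=d_G(h,k)$ for all $g,h,k$ and every ball is finite. Asymptotic cones $\operatorname{Cone}_\omega(X,c,d)$: for a non-principal ultrafilter $\omega$ on $\mathbb{N}$, a sequence $c$ in $X$ and positive reals $d_n$ with $\lim_\omega d_n=\infty$,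 the set of sequences $(x_n)$ with $\lim_\omega d(x_n,c_n)/d_n<\infty$ with pseudometric $\lim_\omega d(x_n,y_n)/d_n$, modulo distance zero. Ultrametric: $d(x,y)\le\max\{d(x,z),d(y,z)\}$. *)

theory Defs
  imports Complex_Main "HOL-Algebra.Group" "HOL-Library.Extended_Nat"
begin

definition metric_on :: "'a set \<Rightarrow> ('a \<Rightarrow> 'a \<Rightarrow> real) \<Rightarrow> bool" where
  "metric_on X d \<longleftrightarrow>
     (\<forall>x\<in>X. \<forall>y\<in>X. 0 \<le> d x y \<and> (d x y = 0 \<longleftrightarrow> x = y) \<and> d x y = d y x) \<and>
     (\<forall>x\<in>X. \<forall>y\<in>X. \<forall>z\<in>X. d x z \<le> d x y + d y z)"

definition s_chain_joined ::
  "('a \<Rightarrow> 'a \<Rightarrow> real) \<Rightarrow> real \<Rightarrow> 'a set \<Rightarrow> 'a \<Rightarrow> 'a \<Rightarrow> bool" where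
  "s_chain_joined d s U x y \<longleftrightarrow>
     (\<exists>xs. xs \<noteq> [] \<and> hd xs = x \<and> last xs = y \<and> set xs \<subseteq> U \<and>
           (\<forall>i. Suc i < length xs \<longrightarrow> d (xs ! i) (xs ! Suc i) < s))"

definition s_component ::
  "('a \<Rightarrow> 'a \<Rightarrow> real) \<Rightarrow> real \<Rightarrow> 'a set \<Rightarrow> 'a \<Rightarrow> 'a set" where
  "s_component d s U x = {y. s_chain_joined d s U x y}"

definition s_components ::
  "('a \<Rightarrow> 'a \<Rightarrow> real) \<Rightarrow> real \<Rightarrow> 'a set \<Rightarrow> 'a set set" where
  "s_components d s U = s_component d s U ` U"

definition diam_le :: "('a \<Rightarrow> 'a \<Rightarrow> real) \<Rightarrow> 'a set \<Rightarrow> real \<Rightarrow> bool" where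
  "diam_le d A r \<longleftrightarrow> (\<forall>x\<in>A. \<forall>y\<in>A. d x y \<le> r)"

definition control_function ::
  "'a set \<Rightarrow> ('a \<Rightarrow> 'a \<Rightarrow> real) \<Rightarrow> nat \<Rightarrow> (real \<Rightarrow> real) \<Rightarrow> bool" where
  "control_function X d n D \<longleftrightarrow>
     mono_on {0<..} D \<and> (\<forall>s>0. 0 \<le> D s) \<and>
     (\<forall>s>0. \<exists>U :: nat \<Rightarrow> 'a set.
        (\<forall>i\<le>n. U i \<subseteq> X) \<and> X \<subseteq> (\<Union>i\<le>n. U i) \<and>
        (\<forall>i\<le>n. \<forall>C\<in>s_components d s (U i). diam_le d C (D s)))"

definition asdim_le :: "'a set \<Rightarrow> ('a \<Rightarrow> 'a \<Rightarrow> real) \<Rightarrow> nat \<Rightarrow> bool" where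
  "asdim_le X d n \<longleftrightarrow> (\<exists>D. control_function X d n D)"

definition asdim_AN_le :: "'a set \<Rightarrow> ('a \<Rightarrow> 'a \<Rightarrow> real) \<Rightarrow> nat \<Rightarrow> bool" where
  "asdim_AN_le X d n \<longleftrightarrow>
     (\<exists>C k. C > 0 \<and> control_function X d n (\<lambda>s. C * s + k))"

definition asdim :: "'a set \<Rightarrow> ('a \<Rightarrow> 'a \<Rightarrow> real) \<Rightarrow> enat" where
  "asdim X d = (if \<exists>n. asdim_le X d n then enat (LEAST n. asdim_le X d n) else \<infinity>)"

definition asdim_AN :: "'a set \<Rightarrow> ('a \<Rightarrow> 'a \<Rightarrow> real) \<Rightarrow> enat" where
  "asdim_AN X d = (if \<exists>n. asdim_AN_le X d n then enat (LEAST n. asdim_AN_le X d n) else \<infinity>)"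

definition coarse_embedding ::
  "'a set \<Rightarrow> ('a \<Rightarrow> 'a \<Rightarrow> real) \<Rightarrow> 'b set \<Rightarrow> ('b \<Rightarrow> 'b \<Rightarrow> real) \<Rightarrow> ('a \<Rightarrow> 'b) \<Rightarrow> bool" where
  "coarse_embedding X dX Y dY f \<longleftrightarrow> f ` X \<subseteq> Y \<and>
     (\<exists>\<rho>m \<rho>p :: real \<Rightarrow> real. mono_on {0..} \<rho>m \<and> mono_on {0..} \<rho>p \<and>
        filterlim \<rho>m at_top at_top \<and>
        (\<forall>x\<in>X. \<forall>y\<in>X. \<rho>m (dX x y) \<le> dY (f x) (f y) \<and> dY (f x) (f y) \<le> \<rho>p (dX x y)))"

definition coarse_equivalence ::
  "'a set \<Rightarrow> ('a \<Rightarrow> 'a \<Rightarrow> real) \<Rightarrow> 'b set \<Rightarrow> ('b \<Rightarrow> 'b \<Rightarrow> real) \<Rightarrow> ('a \<Rightarrow> 'b) \<Rightarrow> bool" where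
  "coarse_equivalence X dX Y dY f \<longleftrightarrow> coarse_embedding X dX Y dY f \<and>
     (\<exists>K. \<forall>y\<in>Y. \<exists>x\<in>X. dY (f x) y \<le> K)"

definition nonprincipal_ultrafilter :: "nat filter \<Rightarrow> bool" where
  "nonprincipal_ultrafilter \<omega> \<longleftrightarrow> \<omega> \<noteq> bot \<and>
     (\<forall>P. eventually P \<omega> \<or> eventually (\<lambda>n. \<not> P n) \<omega>) \<and> \<omega> \<le> cofinite"

text \<open>Points of Cone_omega(X,c,d): sequences in X with bounded (hence finite) omega-limit
  of d(x_n,c_n)/d_n.\<close>
definition cone_points ::
  "'a set \<Rightarrow> ('a \<Rightarrow> 'a \<Rightarrow> real) \<Rightarrow> nat filter \<Rightarrow> (nat \<Rightarrow> 'a) \<Rightarrow> (nat \<Rightarrow> real) \<Rightarrow> (nat \<Rightarrow> 'a) set" where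
  "cone_points X d \<omega> c s = {x. (\<forall>n. x n \<in> X) \<and>
      (\<exists>B. eventually (\<lambda>n. d (x n) (c n) / s n \<le> B) \<omega>)}"

definition cone_pdist ::
  "('a \<Rightarrow> 'a \<Rightarrow> real) \<Rightarrow> nat filter \<Rightarrow> (nat \<Rightarrow> real) \<Rightarrow> (nat \<Rightarrow> 'a) \<Rightarrow> (nat \<Rightarrow> 'a) \<Rightarrow> real" where
  "cone_pdist d \<omega> s x y = Lim \<omega> (\<lambda>n. d (x n) (y n) / s n)"

text \<open>The cone (quotient by distance zero) is ultrametric; the ultrametric inequality for
  the quotient metric is the same as for the pseudometric on representatives.\<close>
definition cone_ultrametric ::
  "'a set \<Rightarrow> ('a \<Rightarrow> 'a \<Rightarrow> real) \<Rightarrow> nat filter \<Rightarrow> (nat \<Rightarrow> 'a) \<Rightarrow> (nat \<Rightarrow> real) \<Rightarrow> bool" where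
  "cone_ultrametric X d \<omega> c s \<longleftrightarrow>
     (\<forall>x\<in>cone_points X d \<omega> c s. \<forall>y\<in>cone_points X d \<omega> c s. \<forall>z\<in>cone_points X d \<omega> c s.
        cone_pdist d \<omega> s x y \<le> max (cone_pdist d \<omega> s x z) (cone_pdist d \<omega> s y z))"

definition all_cones_ultrametric :: "'a set \<Rightarrow> ('a \<Rightarrow> 'a \<Rightarrow> real) \<Rightarrow> bool" where
  "all_cones_ultrametric X d \<longleftrightarrow>
     (\<forall>\<omega> c s. nonprincipal_ultrafilter \<omega> \<and> (\<forall>n. c n \<in> X) \<and> (\<forall>n. s n > 0) \<and>
        filterlim s at_top \<omega> \<longrightarrow> cone_ultrametric X d \<omega> c s)"

definition proper_left_invariant_metric ::
  "('b, 'c) monoid_scheme \<Rightarrow> ('b \<Rightarrow> 'b \<Rightarrow> real) \<Rightarrow> bool" where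
  "proper_left_invariant_metric G d \<longleftrightarrow> metric_on (carrier G) d \<and>
     (\<forall>g\<in>carrier G. \<forall>h\<in>carrier G. \<forall>k\<in>carrier G. d (g \<otimes>\<^bsub>G\<^esub> h) (g \<otimes>\<^bsub>G\<^esub> k) = d h k) \<and>
     (\<forall>x\<in>carrier G. \<forall>r. finite {y\<in>carrier G. d x y \<le> r})"

end

theory Submission
  imports Defs "HOL-Analysis.Analysis"
begin

definition kk :: "(nat \<Rightarrow> real) \<Rightarrow> real \<Rightarrow> nat" where
  "kk T t = (LEAST i. t < T i)"

definition ff :: "(nat \<Rightarrow> real) \<Rightarrow> real \<Rightarrow> real" where
  "ff T t = (if t \<le> 0 then 0 else 1 + real (kk T t))"

definition goodT :: "(nat \<Rightarrow> real) \<Rightarrow> bool" where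
  "goodT T \<longleftrightarrow> T 0 = 1 \<and> (\<forall>i. 2 * T i \<le> T (Suc i))"

lemma T_pow: "goodT T \<Longrightarrow> 2 ^ i \<le> T i"
proof (induction i)
  case 0 then show ?case by (simp add: goodT_def)
next
  case (Suc i)
  then have "2 * 2 ^ i \<le> 2 * T i" by simp
  also have "\<dots> \<le> T (Suc i)" using Suc.prems unfolding goodT_def by blast
  finally show ?case by simp
qed

lemma T_pos: "goodT T \<Longrightarrow> 0 < T i"
proof -
  assume "goodT T"
  then have "2 ^ i \<le> T i" by (rule T_pow)
  moreover have "(0::real) < 2 ^ i" by simp
  ultimately show ?thesis by linarith
qed

lemma T_mono: assumes "goodT T" "i \<le> j" shows "T i \<le> T j"
proof -
  have "\<And>n. T n \<le> T (Suc n)"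
  proof -
    fix n
    have "2 * T n \<le> T (Suc n)" using assms(1) unfolding goodT_def by blast
    moreover have "0 < T n" using T_pos[OF assms(1)] by blast
    ultimately show "T n \<le> T (Suc n)" by linarith
  qed
  then show ?thesis using assms(2) by (rule lift_Suc_mono_le)
qed

lemma kk_ex: "goodT T \<Longrightarrow> \<exists>i. t < T i"
proof -
  assume g: "goodT T"
  obtain n where "t < 2 ^ n" using real_arch_pow[of 2 t] by auto
  then show ?thesis using T_pow[OF g, of n] by (meson order_less_le_trans)
qed

lemma kk_lt: "goodT T \<Longrightarrow> t < T (kk T t)"
  unfolding kk_def using kk_ex by (metis LeastI_ex)

lemma kk_le: "t < T i \<Longrightarrow> kk T t \<le> i"
  unfolding kk_def by (rule Least_le)

lemma kk_mono: "goodT T \<Longrightarrow> t \<le> t' \<Longrightarrow> kk T t \<le> kk T t'"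
  by (meson kk_le kk_lt order_le_less_trans)

lemma kk_double: assumes g: "goodT T" and "0 \<le> t" shows "kk T (2*t) \<le> kk T t + 1"
proof -
  have "2*t < 2 * T (kk T t)" using kk_lt[OF g, of t] by simp
  also have "\<dots> \<le> T (Suc (kk T t))" using g unfolding goodT_def by auto
  finally show ?thesis using kk_le by fastforce
qed

lemma kk_le_ff: assumes g: "goodT T" shows "real (kk T t) \<le> ff T t"
proof (cases "t \<le> 0")
  case True
  then have "t < T 0" using g unfolding goodT_def by simp
  then have "kk T t = 0" using kk_le by fastforce
  then show ?thesis by (simp add: ff_def)
qed (simp add: ff_def)

lemma ff_nonneg: "0 \<le> ff T t" by (simp add: ff_def)

lemma ff_le_kk: "ff T t \<le> 1 + real (kk T t)" by (simp add: ff_def)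

lemma ff_mono: assumes g: "goodT T" and "t \<le> t'" shows "ff T t \<le> ff T t'"
  using kk_mono[OF g assms(2)] assms(2) by (simp add: ff_def)

lemma ff_zero: "0 \<le> t \<Longrightarrow> ff T t = 0 \<longleftrightarrow> t = 0"
  by (simp add: ff_def)

lemma ff_subadd: assumes g: "goodT T" and "0 \<le> a" "0 \<le> b" shows "ff T (a+b) \<le> ff T a + ff T b"
proof (cases "a = 0 \<or> b = 0")
  case True then show ?thesis using ff_nonneg[of T] by auto
next
  case False
  then have pos: "a > 0" "b > 0" using assms by auto
  have "ff T (a+b) \<le> ff T (2 * max a b)" using ff_mono[OF g] by simp
  also have "\<dots> = 1 + real (kk T (2 * max a b))" using pos by (simp add: ff_def)
  also have "\<dots> \<le> 2 + real (kk T (max a b))"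
  proof -
    have "kk T (2 * max a b) \<le> kk T (max a b) + 1" using kk_double[OF g, of "max a b"] pos by simp
    then have "real (kk T (2 * max a b)) \<le> real (kk T (max a b)) + 1" by linarith
    then show ?thesis by simp
  qed
  also have "\<dots> \<le> ff T a + ff T b" using pos kk_mono[OF g] by (simp add: ff_def max_def)
  finally show ?thesis .
qed

lemma ff_double: assumes g: "goodT T" and "0 \<le> t" shows "ff T (2*t) \<le> ff T t + 1"
  using kk_double[OF g assms(2)] assms(2) by (simp add: ff_def)

lemma ff_big: assumes g: "goodT T" and "T i \<le> t" shows "real i + 1 \<le> ff T t"
proof -
  have "i < kk T t"
  proof (rule ccontr)
    assume "\<not> i < kk T t"
    then have "T (kk T t) \<le> T i" using T_mono[OF g] by simp
    then show False using kk_lt[OF g, of t] assms by simp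
  qed
  moreover have "t > 0" using T_pos[OF g, of i] assms by simp
  ultimately show ?thesis by (simp add: ff_def)
qed

lemma ff_tendsto: assumes g: "goodT T" shows "filterlim (ff T) at_top at_top"
  unfolding filterlim_at_top
proof
  fix Z :: real
  obtain i :: nat where "Z \<le> real i" using real_arch_simple by blast
  then have "\<forall>t\<ge>T i. Z \<le> ff T t"
  proof (intro allI impI)
    fix t assume "T i \<le> t"
    then have "real i + 1 \<le> ff T t" using ff_big[OF g] by blast
    then show "Z \<le> ff T t" using \<open>Z \<le> real i\<close> by linarith
  qed
  then have H: "\<And>t. T i \<le> t \<Longrightarrow> Z \<le> ff T t" by blast
  have "eventually (\<lambda>x. T i \<le> x) at_top" by (rule eventually_ge_at_top)
  then show "\<forall>\<^sub>F x in at_top. Z \<le> ff T x" by (rule eventually_mono) (rule H)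
qed

lemma ff_bound: assumes g: "goodT T" and "ff T t \<le> M" shows "t < T (nat \<lceil>M\<rceil>)"
proof -
  have "real (kk T t) \<le> M" using kk_le_ff[OF g, of t] assms(2) by simp
  then have "kk T t \<le> nat \<lceil>M\<rceil>" by linarith
  then have "T (kk T t) \<le> T (nat \<lceil>M\<rceil>)" using T_mono[OF g] by blast
  then show ?thesis using kk_lt[OF g, of t] by linarith
qed

lemma chain_transfer:
  assumes "s_chain_joined d s U x y" "\<forall>a\<in>U. \<forall>b\<in>U. d a b < s \<longrightarrow> d2 a b < s2"
  shows "s_chain_joined d2 s2 U x y"
proof -
  obtain xs where xs1: "xs \<noteq> []" and xs2: "hd xs = x" and xs3: "last xs = y" and xs4: "set xs \<subseteq> U"
    and xs5: "\<forall>i. Suc i < length xs \<longrightarrow> d (xs ! i) (xs ! Suc i) < s"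
    using assms(1) unfolding s_chain_joined_def by blast
  have st: "\<forall>i. Suc i < length xs \<longrightarrow> d2 (xs ! i) (xs ! Suc i) < s2"
  proof (intro allI impI)
    fix i assume i: "Suc i < length xs"
    have i1: "i < length xs" using i by simp
    have m1: "xs ! i \<in> U" using nth_mem[OF i1] xs4 by blast
    have m2: "xs ! Suc i \<in> U" using nth_mem[OF i] xs4 by blast
    have "d (xs ! i) (xs ! Suc i) < s" using xs5 i by blast
    then show "d2 (xs ! i) (xs ! Suc i) < s2" using assms(2) m1 m2 by blast
  qed
  show ?thesis unfolding s_chain_joined_def
    by (rule exI[of _ xs]) (intro conjI xs1 xs2 xs3 xs4 st)
qed

lemma comp_transfer:
  assumes "C \<in> s_components d s U" "\<forall>a\<in>U. \<forall>b\<in>U. d a b < s \<longrightarrow> d2 a b < s2"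
    "\<forall>C'\<in>s_components d2 s2 U. diam_le d2 C' r"
  shows "diam_le d2 C r"
proof -
  obtain x where x1: "x \<in> U" and x2: "C = s_component d s U x"
    using assms(1) unfolding s_components_def by (rule imageE)
  have sub: "C \<subseteq> s_component d2 s2 U x"
  proof
    fix y assume "y \<in> C"
    then have "s_chain_joined d s U x y" using x2 unfolding s_component_def by simp
    then have "s_chain_joined d2 s2 U x y" using assms(2) by (rule chain_transfer)
    then show "y \<in> s_component d2 s2 U x" unfolding s_component_def by simp
  qed
  have "s_component d2 s2 U x \<in> s_components d2 s2 U" using x1 unfolding s_components_def by (rule imageI)
  then have "diam_le d2 (s_component d2 s2 U x) r" using assms(3) by blast
  then show ?thesis using sub unfolding diam_le_def by blast
qed

lemma ultra_lim:
  fixes u :: "nat \<Rightarrow> real" and a b :: real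
  assumes u: "nonprincipal_ultrafilter \<omega>" and ev: "eventually (\<lambda>n. u n \<in> {a..b}) \<omega>"
  shows "\<exists>L. (u \<longlongrightarrow> L) \<omega>"
proof -
  let ?F = "filtermap u \<omega>"
  have Fnb: "?F \<noteq> bot" using u unfolding nonprincipal_ultrafilter_def by (simp add: filtermap_bot_iff)
  have "eventually (\<lambda>x. x \<in> {a..b}) ?F" using ev by (simp add: eventually_filtermap)
  then obtain x where x: "inf (nhds x) ?F \<noteq> bot"
    using compact_filter[THEN iffD1, OF compact_Icc[of a b]] Fnb by blast
  have "(u \<longlongrightarrow> x) \<omega>" unfolding tendsto_def
  proof (intro allI impI)
    fix S :: "real set" assume S: "open S" "x \<in> S"
    show "eventually (\<lambda>n. u n \<in> S) \<omega>"
    proof (rule ccontr)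
      assume "\<not> eventually (\<lambda>n. u n \<in> S) \<omega>"
      then have "eventually (\<lambda>n. \<not> u n \<in> S) \<omega>" using u unfolding nonprincipal_ultrafilter_def by blast
      then have "eventually (\<lambda>y. y \<notin> S) ?F" by (simp add: eventually_filtermap)
      moreover have "eventually (\<lambda>y. y \<in> S) (nhds x)" using S eventually_nhds by blast
      ultimately have "eventually (\<lambda>y. False) (inf (nhds x) ?F)"
        unfolding eventually_inf by blast
      then show False using x by (simp add: eventually_False)
    qed
  qed
  then show ?thesis by blast
qed

lemma max_div_pos: "(0::real) < s \<Longrightarrow> max p q / s = max (p / s) (q / s)"
  by (auto simp: max_def divide_le_cancel)

lemma ultra_cone:
  fixes a b c s :: "nat \<Rightarrow> real" and B :: real
  assumes u: "nonprincipal_ultrafilter \<omega>" and s: "\<forall>n. s n > 0" "filterlim s at_top \<omega>"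
    and a: "\<forall>n. 0 \<le> a n \<and> a n \<le> max (b n) (c n) + 1"
    and ba: "eventually (\<lambda>n. 0 \<le> b n / s n \<and> b n / s n \<le> B) \<omega>"
    and ca: "eventually (\<lambda>n. 0 \<le> c n / s n \<and> c n / s n \<le> B) \<omega>"
  shows "Lim \<omega> (\<lambda>n. a n / s n) \<le> max (Lim \<omega> (\<lambda>n. b n / s n)) (Lim \<omega> (\<lambda>n. c n / s n))"
proof -
  have nb: "\<omega> \<noteq> bot" using u unfolding nonprincipal_ultrafilter_def by simp
  obtain Lb where Lb: "((\<lambda>n. b n / s n) \<longlongrightarrow> Lb) \<omega>" using ultra_lim[OF u, of "\<lambda>n. b n / s n" 0 B] ba
    by (auto elim: eventually_mono)
  obtain Lc where Lc: "((\<lambda>n. c n / s n) \<longlongrightarrow> Lc) \<omega>" using ultra_lim[OF u, of "\<lambda>n. c n / s n" 0 B] ca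
    by (auto elim: eventually_mono)
  have inv: "((\<lambda>n. inverse (s n)) \<longlongrightarrow> 0) \<omega>" using s(2) by (rule tendsto_inverse_0_at_top)
  have ev: "eventually (\<lambda>n. 0 \<le> a n / s n \<and> a n / s n \<le> B + 1) \<omega>"
  proof -
    have ev1: "eventually (\<lambda>n. 1 \<le> s n) \<omega>" using s(2) by (simp add: filterlim_at_top)
    show ?thesis using eventually_conj[OF ev1 eventually_conj[OF ba ca]]
    proof (rule eventually_mono)
      fix n assume h: "1 \<le> s n \<and> (0 \<le> b n / s n \<and> b n / s n \<le> B) \<and> 0 \<le> c n / s n \<and> c n / s n \<le> B"
      have "a n / s n \<le> (max (b n) (c n) + 1) / s n" using a s(1) by (intro divide_right_mono) (auto intro: less_imp_le)
      also have "\<dots> = max (b n / s n) (c n / s n) + 1 / s n" using s(1)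
        by (simp add: add_divide_distrib max_div_pos)
      also have "\<dots> \<le> B + 1"
      proof -
        have "1 / s n \<le> 1" using h by simp
        moreover have "max (b n / s n) (c n / s n) \<le> B" using h by simp
        ultimately show ?thesis by linarith
      qed
      finally have "a n / s n \<le> B + 1" .
      moreover have "0 \<le> a n" "0 < s n" using a s(1) by auto
      ultimately show "0 \<le> a n / s n \<and> a n / s n \<le> B + 1" by simp
    qed
  qed
  obtain La where La: "((\<lambda>n. a n / s n) \<longlongrightarrow> La) \<omega>" using ultra_lim[OF u ev[unfolded atLeastAtMost_iff[symmetric]]] by blast
  have R: "((\<lambda>n. max (b n / s n) (c n / s n) + inverse (s n)) \<longlongrightarrow> max Lb Lc + 0) \<omega>"
    by (intro tendsto_add tendsto_max Lb Lc inv)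
  have "La \<le> max Lb Lc + 0"
  proof (rule tendsto_le[OF nb R La])
    show "eventually (\<lambda>n. a n / s n \<le> max (b n / s n) (c n / s n) + inverse (s n)) \<omega>"
    proof (rule always_eventually, rule allI)
      fix n
      have "a n / s n \<le> (max (b n) (c n) + 1) / s n" using a s(1) by (intro divide_right_mono) (auto intro: less_imp_le)
      also have "\<dots> = max (b n / s n) (c n / s n) + inverse (s n)" using s(1)
        using max_div_pos[of "s n" "b n" "c n"] by (simp add: add_divide_distrib divide_inverse distrib_right)
      finally show "a n / s n \<le> max (b n / s n) (c n / s n) + inverse (s n)" .
    qed
  qed
  then show ?thesis using tendsto_Lim[OF _ La] tendsto_Lim[OF _ Lb] tendsto_Lim[OF _ Lc] nb by simp
qed


lemma ff_max: assumes g: "goodT T" shows "ff T (max p q) \<le> max (ff T p) (ff T q)"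
proof (cases "p \<le> q")
  case True then show ?thesis by (simp add: max_def ff_mono[OF g])
next
  case False then show ?thesis by (simp add: max_def)
qed

lemma metric_ff:
  assumes g: "goodT T" and m: "metric_on X d"
  shows "metric_on X (\<lambda>x y. ff T (d x y))"
  unfolding metric_on_def
proof (intro conjI ballI)
  fix x y assume x: "x \<in> X" and y: "y \<in> X"
  have d0: "0 \<le> d x y" "d x y = 0 \<longleftrightarrow> x = y" "d x y = d y x" using m x y unfolding metric_on_def by blast+
  show "0 \<le> ff T (d x y)" by (rule ff_nonneg)
  show "(ff T (d x y) = 0) = (x = y)" using ff_zero[OF d0(1)] d0(2) by simp
  show "ff T (d x y) = ff T (d y x)" using d0(3) by simp
next
  fix x y z assume x: "x \<in> X" and y: "y \<in> X" and z: "z \<in> X"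
  have t: "d x z \<le> d x y + d y z" "0 \<le> d x y" "0 \<le> d y z"
    using m x y z unfolding metric_on_def by blast+
  have "ff T (d x z) \<le> ff T (d x y + d y z)" using ff_mono[OF g t(1)] .
  also have "\<dots> \<le> ff T (d x y) + ff T (d y z)" using ff_subadd[OF g t(2) t(3)] .
  finally show "ff T (d x z) \<le> ff T (d x y) + ff T (d y z)" .
qed

lemma coarse_ff:
  assumes g: "goodT T" and m: "metric_on X d"
  shows "coarse_equivalence X d X (\<lambda>x y. ff T (d x y)) id"
proof -
  have mo: "mono_on {0..} (ff T)" by (rule mono_onI) (rule ff_mono[OF g])
  have E: "coarse_embedding X d X (\<lambda>x y. ff T (d x y)) id" unfolding coarse_embedding_def
    apply (rule conjI, simp)
    apply (rule exI[of _ "ff T"], rule exI[of _ "ff T"])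
    using mo ff_tendsto[OF g] by simp
  have K: "\<forall>y\<in>X. \<exists>x\<in>X. ff T (d (id x) y) \<le> 0"
  proof
    fix y assume y: "y \<in> X"
    have "d y y = 0" using m y unfolding metric_on_def by blast
    then show "\<exists>x\<in>X. ff T (d (id x) y) \<le> 0" using y by (intro bexI[of _ y]) (simp_all add: ff_def)
  qed
  show ?thesis unfolding coarse_equivalence_def using E K by blast
qed

lemma bound_pair:
  assumes m: "metric_on X e" and p: "p \<in> X" and q: "q \<in> X" and c: "c \<in> X" and s: "s > 0"
    and b1: "e p c / s \<le> B1" and b2: "e q c / s \<le> B2"
  shows "0 \<le> e p q / s \<and> e p q / s \<le> B1 + B2"
proof -
  have t: "e p q \<le> e p c + e c q" "e c q = e q c" "0 \<le> e p q"
    using m p q c unfolding metric_on_def by blast+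
  have "e p q / s \<le> (e p c + e q c) / s" using t s by (intro divide_right_mono) auto
  also have "\<dots> = e p c / s + e q c / s" by (simp add: add_divide_distrib)
  finally show ?thesis using b1 b2 t s by simp
qed

lemma cones_ff:
  assumes g: "goodT T" and m: "metric_on X d"
  shows "all_cones_ultrametric X (\<lambda>x y. ff T (d x y))"
  unfolding all_cones_ultrametric_def cone_ultrametric_def cone_pdist_def
proof (intro allI impI ballI)
  fix \<omega> and c :: "nat \<Rightarrow> 'a" and s :: "nat \<Rightarrow> real" and x y z
  let ?e = "\<lambda>x y. ff T (d x y)"
  have me: "metric_on X ?e" by (rule metric_ff[OF g m])
  assume H: "nonprincipal_ultrafilter \<omega> \<and> (\<forall>n. c n \<in> X) \<and> (\<forall>n. 0 < s n) \<and> filterlim s at_top \<omega>"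
  assume x: "x \<in> cone_points X ?e \<omega> c s" and y: "y \<in> cone_points X ?e \<omega> c s" and z: "z \<in> cone_points X ?e \<omega> c s"
  obtain Bx where Bx: "eventually (\<lambda>n. ?e (x n) (c n) / s n \<le> Bx) \<omega>" and xX: "\<forall>n. x n \<in> X"
    using x unfolding cone_points_def by blast
  obtain By where By: "eventually (\<lambda>n. ?e (y n) (c n) / s n \<le> By) \<omega>" and yX: "\<forall>n. y n \<in> X"
    using y unfolding cone_points_def by blast
  obtain Bz where Bz: "eventually (\<lambda>n. ?e (z n) (c n) / s n \<le> Bz) \<omega>" and zX: "\<forall>n. z n \<in> X"
    using z unfolding cone_points_def by blast
  let ?B = "\<bar>Bx\<bar> + \<bar>By\<bar> + \<bar>Bz\<bar>"
  have cX: "\<forall>n. c n \<in> X" and sp: "\<forall>n. 0 < s n" using H by blast+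
  have ev1: "eventually (\<lambda>n. 0 \<le> ?e (x n) (z n) / s n \<and> ?e (x n) (z n) / s n \<le> ?B) \<omega>"
    using eventually_conj[OF Bx Bz]
  proof (rule eventually_mono)
    fix n assume "?e (x n) (c n) / s n \<le> Bx \<and> ?e (z n) (c n) / s n \<le> Bz"
    then have "0 \<le> ?e (x n) (z n) / s n \<and> ?e (x n) (z n) / s n \<le> Bx + Bz"
      using bound_pair[OF me, of "x n" "z n" "c n" "s n" Bx Bz] xX zX cX sp by blast
    then show "0 \<le> ?e (x n) (z n) / s n \<and> ?e (x n) (z n) / s n \<le> ?B" by linarith
  qed
  have ev2: "eventually (\<lambda>n. 0 \<le> ?e (y n) (z n) / s n \<and> ?e (y n) (z n) / s n \<le> ?B) \<omega>"
    using eventually_conj[OF By Bz]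
  proof (rule eventually_mono)
    fix n assume "?e (y n) (c n) / s n \<le> By \<and> ?e (z n) (c n) / s n \<le> Bz"
    then have "0 \<le> ?e (y n) (z n) / s n \<and> ?e (y n) (z n) / s n \<le> By + Bz"
      using bound_pair[OF me, of "y n" "z n" "c n" "s n" By Bz] yX zX cX sp by blast
    then show "0 \<le> ?e (y n) (z n) / s n \<and> ?e (y n) (z n) / s n \<le> ?B" by linarith
  qed
  have pw: "\<forall>n. 0 \<le> ?e (x n) (y n) \<and> ?e (x n) (y n) \<le> max (?e (x n) (z n)) (?e (y n) (z n)) + 1"
  proof
    fix n
    have t: "d (x n) (y n) \<le> d (x n) (z n) + d (z n) (y n)" "d (z n) (y n) = d (y n) (z n)"
      "0 \<le> d (x n) (z n)" "0 \<le> d (y n) (z n)"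
      using m xX yX zX unfolding metric_on_def by blast+
    have "d (x n) (y n) \<le> 2 * max (d (x n) (z n)) (d (y n) (z n))" using t by linarith
    then have "?e (x n) (y n) \<le> ff T (2 * max (d (x n) (z n)) (d (y n) (z n)))" by (rule ff_mono[OF g])
    also have "\<dots> \<le> ff T (max (d (x n) (z n)) (d (y n) (z n))) + 1"
      using t by (intro ff_double[OF g]) simp
    also have "\<dots> \<le> max (?e (x n) (z n)) (?e (y n) (z n)) + 1" using ff_max[OF g] by simp
    finally show "0 \<le> ?e (x n) (y n) \<and> ?e (x n) (y n) \<le> max (?e (x n) (z n)) (?e (y n) (z n)) + 1"
      using ff_nonneg by simp
  qed
  show "Lim \<omega> (\<lambda>n. ?e (x n) (y n) / s n)
      \<le> max (Lim \<omega> (\<lambda>n. ?e (x n) (z n) / s n)) (Lim \<omega> (\<lambda>n. ?e (y n) (z n) / s n))"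
    using ultra_cone[of \<omega> s "\<lambda>n. ?e (x n) (y n)" "\<lambda>n. ?e (x n) (z n)" "\<lambda>n. ?e (y n) (z n)" ?B]
      H pw ev1 ev2 by blast
qed

lemma AN_up:
  assumes g: "goodT T" and cf: "control_function X d n D" and DT: "\<forall>m. D (T m) < T (Suc m)"
  shows "asdim_AN_le X (\<lambda>x y. ff T (d x y)) n"
  unfolding asdim_AN_le_def
proof (intro exI conjI)
  show "(1::real) > 0" by simp
  show "control_function X (\<lambda>x y. ff T (d x y)) n (\<lambda>s. 1 * s + 3)"
    unfolding control_function_def
  proof (intro conjI allI impI)
    show "mono_on {0<..} (\<lambda>s::real. 1 * s + 3)" by (rule mono_onI) simp
    fix s :: real assume s: "0 < s"
    then show "0 \<le> 1 * s + 3" by simp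
    let ?m = "nat \<lceil>s\<rceil>"
    have Tm: "0 < T ?m" by (rule T_pos[OF g])
    obtain U where U1: "\<forall>i\<le>n. U i \<subseteq> X" and U2: "X \<subseteq> (\<Union>i\<le>n. U i)"
      and U3: "\<forall>i\<le>n. \<forall>C\<in>s_components d (T ?m) (U i). diam_le d C (D (T ?m))"
      using cf Tm unfolding control_function_def by blast
    have DTm: "D (T ?m) < T (Suc ?m)" using DT by blast
    have fD: "ff T (D (T ?m)) \<le> 1 * s + 3"
    proof -
      have "kk T (D (T ?m)) \<le> Suc ?m" using DTm by (rule kk_le)
      then have "real (kk T (D (T ?m))) \<le> real ?m + 1" by simp
      moreover have "real ?m \<le> s + 1" using s by linarith
      ultimately show ?thesis using ff_le_kk[of T "D (T ?m)"] by linarith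
    qed
    show "\<exists>U. (\<forall>i\<le>n. U i \<subseteq> X) \<and> X \<subseteq> (\<Union>i\<le>n. U i) \<and>
        (\<forall>i\<le>n. \<forall>C\<in>s_components (\<lambda>x y. ff T (d x y)) s (U i). diam_le (\<lambda>x y. ff T (d x y)) C (1 * s + 3))"
    proof (intro exI[of _ U] conjI)
      show "\<forall>i\<le>n. U i \<subseteq> X" by (rule U1)
      show "X \<subseteq> (\<Union>i\<le>n. U i)" by (rule U2)
    next
      show "\<forall>i\<le>n. \<forall>C\<in>s_components (\<lambda>x y. ff T (d x y)) s (U i). diam_le (\<lambda>x y. ff T (d x y)) C (1 * s + 3)"
      proof (intro allI impI ballI)
      fix i C assume i: "i \<le> n" and C: "C \<in> s_components (\<lambda>x y. ff T (d x y)) s (U i)"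
      have tr: "\<forall>a\<in>U i. \<forall>b\<in>U i. ff T (d a b) < s \<longrightarrow> d a b < T ?m"
        using ff_bound[OF g] less_imp_le by blast
      have "diam_le d C (D (T ?m))" using comp_transfer[OF C tr] U3 i by blast
      then show "diam_le (\<lambda>x y. ff T (d x y)) C (1 * s + 3)" unfolding diam_le_def
        using ff_mono[OF g] fD by (meson order_trans)
    qed
    qed
  qed
qed

lemma AN_down:
  assumes g: "goodT T" and an: "asdim_AN_le X (\<lambda>x y. ff T (d x y)) m"
  shows "asdim_le X d m"
proof -
  obtain C k where C: "C > 0" and cf: "control_function X (\<lambda>x y. ff T (d x y)) m (\<lambda>s. C * s + k)"
    using an unfolding asdim_AN_le_def by blast
  define E where "E = (\<lambda>s. T (nat \<lceil>C * (ff T s + 1) + k\<rceil>))"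
  have "control_function X d m E"
    unfolding control_function_def
  proof (intro conjI allI impI)
    show "mono_on {0<..} E"
    proof (rule mono_onI)
      fix r t :: real assume "r \<le> t"
      then have "ff T r \<le> ff T t" by (rule ff_mono[OF g])
      then have "C * (ff T r + 1) + k \<le> C * (ff T t + 1) + k" using C by simp
      then have "nat \<lceil>C * (ff T r + 1) + k\<rceil> \<le> nat \<lceil>C * (ff T t + 1) + k\<rceil>"
        by (intro nat_mono ceiling_mono)
      then show "E r \<le> E t" unfolding E_def by (rule T_mono[OF g])
    qed
    fix s :: real assume s: "0 < s"
    show "0 \<le> E s" unfolding E_def using T_pos[OF g] less_imp_le by blast
    let ?s = "ff T s + 1"
    have s': "0 < ?s" using ff_nonneg[of T s] by linarith
    obtain U where U1: "\<forall>i\<le>m. U i \<subseteq> X" and U2: "X \<subseteq> (\<Union>i\<le>m. U i)"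
      and U3: "\<forall>i\<le>m. \<forall>C'\<in>s_components (\<lambda>x y. ff T (d x y)) ?s (U i). diam_le (\<lambda>x y. ff T (d x y)) C' (C * ?s + k)"
      using cf s' unfolding control_function_def by blast
    show "\<exists>U. (\<forall>i\<le>m. U i \<subseteq> X) \<and> X \<subseteq> (\<Union>i\<le>m. U i) \<and>
        (\<forall>i\<le>m. \<forall>C\<in>s_components d s (U i). diam_le d C (E s))"
    proof (intro exI[of _ U] conjI)
      show "\<forall>i\<le>m. U i \<subseteq> X" by (rule U1)
      show "X \<subseteq> (\<Union>i\<le>m. U i)" by (rule U2)
    next
      show "\<forall>i\<le>m. \<forall>C\<in>s_components d s (U i). diam_le d C (E s)"
      proof (intro allI impI ballI)
      fix i C' assume i: "i \<le> m" and C': "C' \<in> s_components d s (U i)"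
      have tr: "\<forall>a\<in>U i. \<forall>b\<in>U i. d a b < s \<longrightarrow> ff T (d a b) < ?s"
      proof (intro ballI impI)
        fix a b assume "d a b < s"
        then have "ff T (d a b) \<le> ff T s" by (intro ff_mono[OF g]) simp
        then show "ff T (d a b) < ?s" by simp
      qed
      have "diam_le (\<lambda>x y. ff T (d x y)) C' (C * ?s + k)" using comp_transfer[OF C' tr] U3 i by blast
      then show "diam_le d C' (E s)" unfolding diam_le_def E_def
        using ff_bound[OF g] less_imp_le by blast
    qed
    qed
  qed
  then show ?thesis unfolding asdim_le_def by blast
qed

lemma construction:
  assumes m: "metric_on X d" and a: "asdim X d < \<infinity>"
  shows "\<exists>T. goodT T \<and> metric_on X (\<lambda>x y. ff T (d x y)) \<and>
     coarse_equivalence X d X (\<lambda>x y. ff T (d x y)) id \<and>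
     asdim_AN X (\<lambda>x y. ff T (d x y)) = asdim X d \<and> all_cones_ultrametric X (\<lambda>x y. ff T (d x y))"
proof -
  have ex: "\<exists>n. asdim_le X d n"
  proof (rule ccontr)
    assume "\<not> (\<exists>n. asdim_le X d n)"
    then have "asdim X d = \<infinity>" unfolding asdim_def by simp
    then show False using a by simp
  qed
  define n where "n = (LEAST n. asdim_le X d n)"
  have an: "asdim_le X d n" unfolding n_def using ex by (rule LeastI_ex)
  have asd: "asdim X d = enat n" unfolding asdim_def n_def using ex by simp
  obtain D where cf: "control_function X d n D" using an unfolding asdim_le_def by blast
  define T where "T = rec_nat (1::real) (\<lambda>i t. max (2*t) (D t + 1))"
  have T0: "T 0 = 1" and TS: "\<And>i. T (Suc i) = max (2 * T i) (D (T i) + 1)" unfolding T_def by simp_all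
  have g: "goodT T" unfolding goodT_def using T0 TS by simp
  have DT: "\<forall>m. D (T m) < T (Suc m)" by (simp add: TS less_max_iff_disj)
  let ?e = "\<lambda>x y. ff T (d x y)"
  have up: "asdim_AN_le X ?e n" by (rule AN_up[OF g cf DT])
  have "(LEAST m. asdim_AN_le X ?e m) = n"
  proof (rule Least_equality)
    show "asdim_AN_le X ?e n" by (rule up)
    fix y assume "asdim_AN_le X ?e y"
    then have "asdim_le X d y" by (rule AN_down[OF g])
    then show "n \<le> y" unfolding n_def by (rule Least_le)
  qed
  then have "asdim_AN X ?e = asdim X d" unfolding asdim_AN_def asd using up by auto
  then show ?thesis using g metric_ff[OF g m] coarse_ff[OF g m] cones_ff[OF g m] by blast
qed

lemma proper_ff:
  assumes g: "goodT T" and p: "proper_left_invariant_metric G d"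
  shows "proper_left_invariant_metric G (\<lambda>x y. ff T (d x y))"
  unfolding proper_left_invariant_metric_def
proof (intro conjI ballI allI)
  show "metric_on (carrier G) (\<lambda>x y. ff T (d x y))"
    using p metric_ff[OF g] unfolding proper_left_invariant_metric_def by blast
  fix g h k assume "g \<in> carrier G" "h \<in> carrier G" "k \<in> carrier G"
  then show "ff T (d (g \<otimes>\<^bsub>G\<^esub> h) (g \<otimes>\<^bsub>G\<^esub> k)) = ff T (d h k)"
    using p unfolding proper_left_invariant_metric_def by simp
next
  fix x and r :: real assume x: "x \<in> carrier G"
  have "finite {y \<in> carrier G. d x y \<le> T (nat \<lceil>r\<rceil>)}"
    using p x unfolding proper_left_invariant_metric_def by blast
  moreover have "{y \<in> carrier G. ff T (d x y) \<le> r} \<subseteq> {y \<in> carrier G. d x y \<le> T (nat \<lceil>r\<rceil>)}"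
    using ff_bound[OF g] less_imp_le by blast
  ultimately show "finite {y \<in> carrier G. ff T (d x y) \<le> r}" by (rule finite_subset[rotated])
qed

theorem mainTheorem7:
  fixes X :: "'a set" and G :: "('b, 'c) monoid_scheme"
  shows
  "(\<forall>d. metric_on X d \<and> asdim X d < \<infinity> \<longrightarrow>
      (\<exists>d'. metric_on X d' \<and> coarse_equivalence X d X d' id \<and>
            asdim_AN X d' = asdim X d \<and> all_cones_ultrametric X d')) \<and>
   (\<forall>d. group G \<and> countable (carrier G) \<and> proper_left_invariant_metric G d \<and>
        asdim (carrier G) d < \<infinity> \<longrightarrow>
      (\<exists>d'. proper_left_invariant_metric G d' \<and>
            coarse_equivalence (carrier G) d (carrier G) d' id \<and>
            asdim_AN (carrier G) d' = asdim (carrier G) d \<and>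
            all_cones_ultrametric (carrier G) d'))"
proof (intro conjI allI impI)
  fix d assume "metric_on X d \<and> asdim X d < \<infinity>"
  then obtain T where "metric_on X (\<lambda>x y. ff T (d x y)) \<and>
     coarse_equivalence X d X (\<lambda>x y. ff T (d x y)) id \<and>
     asdim_AN X (\<lambda>x y. ff T (d x y)) = asdim X d \<and> all_cones_ultrametric X (\<lambda>x y. ff T (d x y))"
    using construction by blast
  then show "\<exists>d'. metric_on X d' \<and> coarse_equivalence X d X d' id \<and>
            asdim_AN X d' = asdim X d \<and> all_cones_ultrametric X d'" by blast
next
  fix d assume H: "group G \<and> countable (carrier G) \<and> proper_left_invariant_metric G d \<and>
        asdim (carrier G) d < \<infinity>"
  then have m: "metric_on (carrier G) d" unfolding proper_left_invariant_metric_def by blast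
  obtain T where T: "goodT T" "coarse_equivalence (carrier G) d (carrier G) (\<lambda>x y. ff T (d x y)) id"
     "asdim_AN (carrier G) (\<lambda>x y. ff T (d x y)) = asdim (carrier G) d"
     "all_cones_ultrametric (carrier G) (\<lambda>x y. ff T (d x y))"
    using construction[OF m] H by blast
  have "proper_left_invariant_metric G (\<lambda>x y. ff T (d x y))" using proper_ff[OF T(1)] H by blast
  then show "\<exists>d'. proper_left_invariant_metric G d' \<and>
            coarse_equivalence (carrier G) d (carrier G) d' id \<and>
            asdim_AN (carrier G) d' = asdim (carrier G) d \<and>
            all_cones_ultrametric (carrier G) d'" using T by blast
qed

end
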